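(* There is a homeomorphism $CP^3(S^1)\cong S^1\times S^2$.
   Context: $CP^3(S^1)=(S^1)^3/\mathbb Z_3$ is the cyclic product, the quotient of $(S^1)^3$ by the cyclic group of order 3 generated by cyclic permutation of the coordinates. *)

theory Defs
  imports "HOL-Analysis.Analysis"
begin

definition quotient_topology :: "'a topology \<Rightarrow> ('a \<Rightarrow> 'b) \<Rightarrow> 'b topology" where
  "quotient_topology X q =
     topology (\<lambda>U. U \<subseteq> q ` topspace X \<and> openin X {x \<in> topspace X. q x \<in> U})"

lemma istopology_quotient:
  "istopology (\<lambda>U. U \<subseteq> q ` topspace X \<and> openin X {x \<in> topspace X. q x \<in> U})"
proof -
  have 1: "{x \<in> topspace X. q x \<in> S \<inter> T} =
     {x \<in> topspace X. q x \<in> S} \<inter> {x \<in> topspace X. q x \<in> T}" for S T by auto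
  have 2: "{x \<in> topspace X. q x \<in> \<Union>K} = (\<Union>S\<in>K. {x \<in> topspace X. q x \<in> S})" for K
    by auto
  show ?thesis
    unfolding istopology_def 1 2
    by (auto intro!: openin_Int openin_Union)
qed

lemma openin_quotient_topology:
  "openin (quotient_topology X q) U \<longleftrightarrow>
     U \<subseteq> q ` topspace X \<and> openin X {x \<in> topspace X. q x \<in> U}"
  unfolding quotient_topology_def by (simp add: istopology_quotient)

definition S1 :: "complex set" where "S1 = sphere 0 1"

definition S2 :: "(real^3) set" where "S2 = sphere 0 1"

definition cycperm :: "complex \<times> complex \<times> complex \<Rightarrow> complex \<times> complex \<times> complex" where
  "cycperm = (\<lambda>(a, b, c). (b, c, a))"

definition cyc_orbit :: "complex \<times> complex \<times> complex \<Rightarrow> (complex \<times> complex \<times> complex) set" where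
  "cyc_orbit x = {x, cycperm x, cycperm (cycperm x)}"

definition torus3 :: "(complex \<times> complex \<times> complex) topology" where
  "torus3 = prod_topology (top_of_set S1) (prod_topology (top_of_set S1) (top_of_set S1))"

text \<open>The cyclic product CP^3(S^1) = (S^1)^3 / Z_3 with the quotient topology,
  points being the orbits.\<close>
definition CP3_S1 :: "(complex \<times> complex \<times> complex) set topology" where
  "CP3_S1 = quotient_topology torus3 cyc_orbit"

end

theory Submission
  imports Defs "HOL-Computational_Algebra.Fundamental_Theorem_Algebra"
begin

definition RR :: "complex \<Rightarrow> complex \<Rightarrow> real" where
  "RR p w = 27 - 18*(cmod w)^2 - (cmod w)^4 + 8*Re(cnj p * w^3)"

definition ssf :: "complex \<Rightarrow> complex \<Rightarrow> complex \<Rightarrow> real" where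
  "ssf a b c = Im (a * cnj b + b * cnj c + c * cnj a)"

lemma of_real_Im: "complex_of_real (Im z) = (z - cnj z) / (2*\<i>)"
  by (simp add: complex_eq_iff)
lemma of_real_Re: "complex_of_real (Re z) = (z + cnj z) / 2"
  by (simp add: complex_eq_iff)

lemma unit_cnj: "cmod a = 1 \<Longrightarrow> a * cnj a = 1"
  by (metis complex_norm_square mult.commute of_real_1 power_one)

lemma RR_complex: "complex_of_real (RR p w) =
   27 - 18*(w*cnj w) - (w*cnj w)^2 + 4*(cnj p * w^3 + p * cnj w ^3)"
proof -
  have "complex_of_real ((cmod w)^4) = (w*cnj w)^2"
    by (metis complex_norm_square of_real_power power_mult num_double numeral_times_numeral)
  moreover have "complex_of_real (Re(cnj p * w^3)) = (cnj p * w^3 + p * cnj w ^3)/2"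
    by (simp only: of_real_Re complex_cnj_mult complex_cnj_cnj complex_cnj_power)
  moreover have "complex_of_real ((cmod w)^2) = w * cnj w" by (rule complex_norm_square)
  ultimately show ?thesis unfolding RR_def
    by (simp only: of_real_add of_real_diff of_real_mult of_real_numeral) simp
qed

lemma idt:
  fixes a b c ab bb cb :: complex
  assumes "a*ab = 1" "b*bb=1" "c*cb=1"
  shows "- (((a*bb+b*cb+c*ab) - (ab*b+bb*c+cb*a))^2) = 27 - 18*((a+b+c)*(ab+bb+cb)) - ((a+b+c)*(ab+bb+cb))^2 + 4*(ab*bb*cb*(a+b+c)^3 + a*b*c*(ab+bb+cb)^3)"
  using assms by algebra

lemma four_div: "4 * ((X::complex) / (2*\<i>))^2 = - (X^2)"
  by (simp add: power_divide power_mult_distrib)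

lemma sq_identity:
  assumes "cmod a = 1" "cmod b = 1" "cmod c = 1"
  shows "4 * (ssf a b c)^2 = RR (a*b*c) (a+b+c)"
proof -
  have ha: "a * cnj a = 1" "b * cnj b = 1" "c * cnj c = 1" using assms unit_cnj by auto
  have "complex_of_real (4 * (ssf a b c)^2) = complex_of_real (RR (a*b*c) (a+b+c))"
    unfolding RR_complex ssf_def of_real_mult of_real_power of_real_numeral of_real_Im
       complex_cnj_mult complex_cnj_add complex_cnj_cnj complex_cnj_power
    unfolding four_div using idt[OF ha] by simp
  then show ?thesis by (simp only: of_real_eq_iff)
qed

lemma idtD:
  fixes a b c ab bb cb :: complex
  assumes "a*ab = 1" "b*bb=1" "c*cb=1"
  shows "- (((a*bb+b*cb+c*ab) - (ab*b+bb*c+cb*a))^2) = ((a-b)*(b-c)*(c-a))*((ab-bb)*(bb-cb)*(cb-ab))"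
  using assms by algebra

lemma ssf_zero:
  assumes "cmod a = 1" "cmod b = 1" "cmod c = 1" "ssf a b c = 0"
  shows "a = b \<or> b = c \<or> c = a"
proof -
  have ha: "a * cnj a = 1" "b * cnj b = 1" "c * cnj c = 1" using assms unit_cnj by auto
  have "complex_of_real (4 * (ssf a b c)^2) = ((a-b)*(b-c)*(c-a)) * cnj ((a-b)*(b-c)*(c-a))"
    unfolding ssf_def of_real_mult of_real_power of_real_numeral of_real_Im
       complex_cnj_mult complex_cnj_add complex_cnj_diff complex_cnj_cnj complex_cnj_power four_div
    using idtD[OF ha] by simp
  then have "(a-b)*(b-c)*(c-a) = 0" using assms(4) by simp
  then show ?thesis by auto
qed

lemma e2_unit:
  assumes "cmod a = 1" "cmod b = 1" "cmod c = 1"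
  shows "a*b+b*c+c*a = a*b*c*cnj(a+b+c)"
proof -
  have ha: "a * cnj a = 1" "b * cnj b = 1" "c * cnj c = 1" using assms unit_cnj by auto
  show ?thesis unfolding complex_cnj_add using ha by algebra
qed

lemma ssf_swap: "ssf a c b = - ssf a b c"
proof -
  have "a * cnj c + c * cnj b + b * cnj a = cnj (a * cnj b + b * cnj c + c * cnj a)"
    by (simp add: algebra_simps)
  then show ?thesis unfolding ssf_def by simp
qed

lemma ssf_rot: "ssf b c a = ssf a b c"
  unfolding ssf_def by (simp add: algebra_simps)

lemma orbit_main:
  assumes u: "cmod a = 1" "cmod b = 1" "cmod c = 1"
    and u': "cmod b' = 1" "cmod c' = 1"
    and p: "a*b'*c' = a*b*c" and w: "a+b'+c' = a+b+c" and s: "ssf a b' c' = ssf a b c"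
  shows "(a,b',c') \<in> {(a,b,c),(b,c,a),(c,a,b)}"
proof -
  have a0: "a \<noteq> 0" using u by auto
  have bc: "b'*c' = b*c" using p a0 by (simp add: mult.assoc)
  have sum: "b'+c' = b+c" using w by simp
  have "(b'-b)*(b'-c) = b'^2 - (b'+c')*b' + b'*c'"
    unfolding sum bc by (simp add: algebra_simps power2_eq_square)
  also have "\<dots> = 0" by (simp add: algebra_simps power2_eq_square)
  finally have "b' = b \<or> b' = c" by simp
  then show ?thesis
  proof
    assume "b' = b" then have "c' = c" using sum by simp
    then show ?thesis using \<open>b' = b\<close> by simp
  next
    assume h: "b' = c" then have hc: "c' = b" using sum by simp
    have "ssf a b c = 0" using s ssf_swap[of a b c] unfolding h hc by simp
    then have "a = b \<or> b = c \<or> c = a" using ssf_zero u by blast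
    then show ?thesis using h hc by auto
  qed
qed

lemma orbit_inv:
  assumes u: "cmod a = 1" "cmod b = 1" "cmod c = 1"
    and u': "cmod a' = 1" "cmod b' = 1" "cmod c' = 1"
    and p: "a'*b'*c' = a*b*c" and w: "a'+b'+c' = a+b+c" and s: "ssf a' b' c' = ssf a b c"
  shows "(a',b',c') \<in> {(a,b,c),(b,c,a),(c,a,b)}"
proof -
  have e2: "a'*b'+b'*c'+c'*a' = a*b+b*c+c*a"
    using e2_unit[OF u] e2_unit[OF u'] p w by simp
  have poly: "(z-a')*(z-b')*(z-c') = (z-a)*(z-b)*(z-c)" for z
  proof -
    have "(z-a')*(z-b')*(z-c') = z^3 - (a'+b'+c')*z^2 + (a'*b'+b'*c'+c'*a')*z - a'*b'*c'"
      by (simp add: algebra_simps power2_eq_square power3_eq_cube)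
    also have "\<dots> = (z-a)*(z-b)*(z-c)"
      unfolding p w e2 by (simp add: algebra_simps power2_eq_square power3_eq_cube)
    finally show ?thesis .
  qed
  have "(a'-a)*(a'-b)*(a'-c) = 0" using poly[of a'] by simp
  then have "a' = a \<or> a' = b \<or> a' = c" by auto
  then show ?thesis
  proof (elim disjE)
    assume "a' = a"
    then show ?thesis using orbit_main[OF u u'(2,3)] p w s by simp
  next
    assume h: "a' = b"
    have "b*b'*c' = b*c*a" "b+b'+c' = b+c+a"
      using p w h by (simp_all add: algebra_simps)
    moreover have "ssf b b' c' = ssf b c a"
      using s h ssf_rot[of b c a] by metis
    ultimately have "(b,b',c') \<in> {(b,c,a),(c,a,b),(a,b,c)}"
      using orbit_main[OF u(2,3,1) u'(2,3)] by blast
    then show ?thesis using h by auto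
  next
    assume h: "a' = c"
    have "c*b'*c' = c*a*b" "c+b'+c' = c+a+b"
      using p w h by (simp_all add: algebra_simps)
    moreover have "ssf c b' c' = ssf c a b"
      using s h ssf_rot[of c a b] ssf_rot[of b c a] by metis
    ultimately have "(c,b',c') \<in> {(c,a,b),(a,b,c),(b,c,a)}"
      using orbit_main[OF u(3,1,2) u'(2,3)] by blast
    then show ?thesis using h by auto
  qed
qed

lemma ineq:
  fixes l m :: real
  assumes "l > 0" "l \<noteq> 1" "m \<ge> 0"
  shows "(1+l)*(27+l^2*m^4) - 8*l^2*m^3 > 0"
proof -
  define k where "k = 1 + l"
  define Y where "Y = k*m"
  have k0: "k > 0" using assms k_def by simp
  have id: "k^3 * ((1+l)*(27+l^2*m^4) - 8*l^2*m^3) = l^2*(Y-6)^2*(Y^2+4*Y+12) + 27*(l-1)^2*(k^2+4*l)"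
    unfolding Y_def k_def by algebra
  have "Y^2+4*Y+12 > 0" using assms unfolding Y_def k_def
    by (smt (verit) mult_nonneg_nonneg zero_le_power2)
  then have t1: "l^2*(Y-6)^2*(Y^2+4*Y+12) \<ge> 0" by simp
  have "(l-1)^2 > 0" using assms by simp
  moreover have "k^2+4*l > 0" using assms k0 by (simp add: add_pos_nonneg)
  ultimately have t2: "27*(l-1)^2*(k^2+4*l) > 0" by simp
  have "k^3 * ((1+l)*(27+l^2*m^4) - 8*l^2*m^3) > 0" using id t1 t2 by linarith
  then show ?thesis using k0 by (simp add: zero_less_mult_iff)
qed

lemma Re_bound: "cmod p = 1 \<Longrightarrow> Re (cnj p * w^3) \<le> (cmod w)^3"
  by (metis abs_Re_le_cmod abs_le_D1 complex_mod_cnj mult_cancel_right2 norm_mult norm_power)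

lemma scale_unique:
  fixes l s :: real
  assumes p: "cmod p = 1" and l: "l > 0"
    and e1: "RR p w = 4* s^2" and e2: "RR p (of_real l * w) = 4*(l* s)^2"
  shows "l = 1"
proof (rule ccontr)
  assume nl: "l \<noteq> 1"
  define A where "A = cmod w"
  define c where "c = Re (cnj p * w^3)"
  have cA: "c \<le> A^3" using Re_bound[OF p] unfolding c_def A_def .
  have A0: "A \<ge> 0" unfolding A_def by simp
  have E1: "4* s^2 = 27 - 18*A^2 - A^4 + 8*c" using e1 unfolding RR_def A_def c_def by simp
  have "cmod (of_real l * w) = l * A" using l unfolding A_def by (simp add: norm_mult)
  moreover have "Re (cnj p * (of_real l * w)^3) = l^3 * c"
    unfolding c_def by (simp add: power_mult_distrib algebra_simps)
  ultimately have E2: "4*(l* s)^2 = 27 - 18*(l*A)^2 - (l*A)^4 + 8*(l^3*c)"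
    using e2 unfolding RR_def by simp
  have "l^2*(4* s^2) - 4*(l* s)^2 = 0" by (simp add: power_mult_distrib)
  then have "l^2*(27 - 18*A^2 - A^4 + 8*c) - (27 - 18*(l*A)^2 - (l*A)^4 + 8*(l^3*c)) = 0"
    using E1 E2 by simp
  then have "(l-1)*((1+l)*(27+l^2*A^4) - 8*l^2*c) = 0"
    by (simp add: algebra_simps power_mult_distrib) (simp add: power2_eq_square power3_eq_cube power4_eq_xxxx algebra_simps)
  then have "(1+l)*(27+l^2*A^4) - 8*l^2*c = 0" using nl by simp
  moreover have "8*l^2*c \<le> 8*l^2*A^3" using cA l by simp
  ultimately show False using ineq[OF l nl A0] by linarith
qed

lemma cubic_root:
  fixes p w :: complex
  shows "\<exists>a. a^3 - w*a^2 + p*cnj w*a - p = 0"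
proof -
  let ?P = "[:-p, p*cnj w, -w, 1:]"
  have "\<not> (\<exists>a l. a \<noteq> 0 \<and> l = 0 \<and> ?P = pCons a l)" by simp
  from fundamental_theorem_of_algebra_alt[OF this] obtain z where "poly ?P z = 0" by blast
  then have "z^3 - w*z^2 + p*cnj w*z - p = 0"
    by (simp add: algebra_simps power2_eq_square power3_eq_cube)
  then show ?thesis by blast
qed

lemma disc_identity:
  fixes a b c :: complex
  shows "((a-b)*(b-c)*(c-a))^2 = (a+b+c)^2*(a*b+b*c+c*a)^2 - 4*(a*b+b*c+c*a)^3
      - 4*(a+b+c)^3*(a*b*c) + 18*(a+b+c)*(a*b+b*c+c*a)*(a*b*c) - 27*(a*b*c)^2"
  by (simp add: algebra_simps power2_eq_square power3_eq_cube)

lemma K_real0: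
  fixes z zb t :: complex
  assumes "t \<noteq> 0" "z \<noteq> 0" "zb \<noteq> 0"
  shows "((t - z)*(z - 1/zb)*(1/zb - t))/(t*z*(1/zb)) = (z*zb - 1)*(1 + 1/(z*zb) - (t/z + (1/t)/zb))"
proof -
  have l: "((t - z)*(z - 1/zb)*(1/zb - t))/(t*z*(1/zb)) = ((t - z)*(z*zb - 1)*(1 - t*zb))/(t*z*zb)"
    using assms by (simp add: divide_simps)
  have r: "(z*zb - 1)*(1 + 1/(z*zb) - (t/z + (1/t)/zb)) = (z*zb - 1)*((t*z*zb + t - t*t*zb - z)/(t*z*zb))"
    using assms by (simp add: divide_simps) (simp add: algebra_simps)
  show ?thesis unfolding l r using assms by (simp add: divide_simps) (simp add: algebra_simps)
qed

lemma aux_r: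
  fixes n x :: real
  assumes "n > 0" "n \<noteq> 1" "x \<le> 1/n"
  shows "(n^2 - 1)*(1 + 1/n^2 - 2*x) \<noteq> 0"
proof -
  have "n^2 \<noteq> 1" using assms by (simp add: power2_eq_1_iff)
  moreover have "1/n \<noteq> 1" using assms by simp
  then have "(1 - 1/n)^2 > 0" by simp
  moreover have "(1 - 1/n)^2 = 1 + 1/n^2 - 2/n" by (simp add: power2_diff power_divide)
  moreover have "2*x \<le> 2/n" using assms by simp
  ultimately show ?thesis by (smt (verit) mult_eq_0_iff)
qed

lemma K_lemma:
  fixes t z :: complex
  assumes t: "cmod t = 1" and z0: "z \<noteq> 0" and z1: "cmod z \<noteq> 1"
  shows "\<exists>r::real. r \<noteq> 0 \<and> ((t - z)*(z - 1/cnj z)*(1/cnj z - t))/(t*z*(1/cnj z)) = of_real r"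
proof -
  define r where "r = ((cmod z)^2 - 1) * (1 + 1/(cmod z)^2 - 2 * Re (t/z))"
  have zb0: "cnj z \<noteq> 0" using z0 by simp
  have eq: "((t - z)*(z - 1/cnj z)*(1/cnj z - t))/(t*z*(1/cnj z)) =
     (z*cnj z - 1)*(1 + 1/(z*cnj z) - (t/z + cnj t/cnj z))"
  proof -
    have t0: "t \<noteq> 0" using t by auto
    have "cnj t = 1/t" using unit_cnj[OF t] t0 by (simp add: field_simps)
    then show ?thesis using K_real0[OF t0 z0 zb0] by simp
  qed
  have re2: "complex_of_real (2 * Re (t/z)) = t/z + cnj t/cnj z"
    by (simp only: of_real_mult of_real_numeral of_real_Re complex_cnj_divide) (simp add: algebra_simps)
  have "complex_of_real r = (z*cnj z - 1)*(1 + 1/(z*cnj z) - (t/z + cnj t/cnj z))"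
    unfolding r_def of_real_mult of_real_diff of_real_add of_real_divide of_real_1 complex_norm_square
      re2[symmetric] by simp
  moreover have "r \<noteq> 0"
  proof -
    have n0: "cmod z > 0" using z0 by simp
    have "Re (t/z) \<le> 1 / cmod z"
      using complex_Re_le_cmod[of "t/z"] t by (simp add: norm_divide)
    then show ?thesis unfolding r_def using aux_r[OF n0 z1] by simp
  qed
  ultimately show ?thesis using eq by metis
qed

lemma disc_p_gen:
  fixes a b c p w pb wb :: complex
  assumes "p*pb = 1" "a+b+c = w" "a*b+b*c+c*a = p*wb" "a*b*c = p"
  shows "((a-b)*(b-c)*(c-a))^2 = -(p^2) * (27 - 18*(w*wb) - (w*wb)^2 + 4*(pb * w^3 + p * wb^3))"
proof -
  have "((a-b)*(b-c)*(c-a))^2 = w^2*(p*wb)^2 - 4*(p*wb)^3 - 4*w^3*p + 18*w*(p*wb)*p - 27*p^2"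
    using disc_identity[of a b c] assms(2-4) by simp
  also have "\<dots> = -(p^2) * (27 - 18*(w*wb) - (w*wb)^2 + 4*(pb * w^3 + p * wb^3))"
    using assms(1) by algebra
  finally show ?thesis .
qed

lemma unit_a:
  fixes a b c :: complex and s :: real
  assumes nz: "a \<noteq> 0" "b \<noteq> 0" "c \<noteq> 0" and pr: "cmod (a*b*c) = 1"
    and refl: "1/cnj a \<in> {a,b,c}"
    and D: "((a-b)*(b-c)*(c-a))^2 = -((a*b*c)^2) * of_real (4* s^2)"
  shows "cmod a = 1"
proof (rule ccontr)
  assume na: "cmod a \<noteq> 1"
  have pnz: "a*b*c \<noteq> 0" using nz by simp
  have key: False if r0: "r \<noteq> 0" and Dr: "((a-b)*(b-c)*(c-a))^2 = (complex_of_real r)^2 * (a*b*c)^2" for r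
  proof -
    have "(complex_of_real r)^2 * (a*b*c)^2 = (- of_real (4* s^2)) * (a*b*c)^2" using D Dr by simp
    moreover have "(a*b*c)^2 \<noteq> 0" using pnz by simp
    ultimately have "(complex_of_real r)^2 = - of_real (4* s^2)"
      using mult_right_cancel[of "(a*b*c)^2" "(complex_of_real r)^2" "- of_real (4* s^2)"] by blast
    then have "complex_of_real (r^2) = complex_of_real (- (4* s^2))" by simp
    then have "r^2 = -(4* s^2)" by (simp only: of_real_eq_iff)
    moreover have "r^2 > 0" using r0 by simp
    moreover have "s^2 \<ge> 0" by simp
    ultimately show False by linarith
  qed
  have "1/cnj a \<noteq> a"
  proof
    assume "1/cnj a = a"
    then have "a * cnj a = 1" using nz by (simp add: field_simps)
    then have "complex_of_real ((cmod a)^2) = 1" by (simp only: complex_norm_square)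
    then have "(cmod a)^2 = 1" by (metis of_real_eq_1_iff)
    then show False using na norm_ge_zero[of a] by (simp add: power2_eq_1_iff)
  qed
  then have "b = 1/cnj a \<or> c = 1/cnj a" using refl by auto
  then show False
  proof
    assume hb: "b = 1/cnj a"
    have "cmod b = 1/cmod a" using hb by (simp add: norm_divide)
    then have "cmod c = 1" using pr nz by (simp add: norm_mult field_simps) (metis mult.assoc mult_1)
    from K_lemma[OF this nz(1) na] obtain r where r: "r \<noteq> 0"
      "((c - a)*(a - 1/cnj a)*(1/cnj a - c))/(c*a*(1/cnj a)) = of_real r" by blast
    then have "((c - a)*(a - b)*(b - c))/(c*a*b) = of_real r" using hb by simp
    then have "(a-b)*(b-c)*(c-a) = of_real r * (a*b*c)" using pnz
      by (simp add: field_simps)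
    then have "((a-b)*(b-c)*(c-a))^2 = (complex_of_real r)^2 * (a*b*c)^2"
      by (simp add: power_mult_distrib)
    then show False using key r by blast
  next
    assume hc: "c = 1/cnj a"
    have "cmod c = 1/cmod a" using hc by (simp add: norm_divide)
    then have "cmod b = 1" using pr nz by (simp add: norm_mult field_simps) (metis mult.assoc mult.commute mult_1)
    from K_lemma[OF this nz(1) na] obtain r where r: "r \<noteq> 0"
      "((b - a)*(a - 1/cnj a)*(1/cnj a - b))/(b*a*(1/cnj a)) = of_real r" by blast
    then have "((b - a)*(a - c)*(c - b))/(b*a*c) = of_real r" using hc by simp
    then have "(b - a)*(a - c)*(c - b) = of_real r * (a*b*c)" using pnz
      by (simp add: field_simps)
    then have "(a-b)*(b-c)*(c-a) = - (of_real r * (a*b*c))"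
      by (simp add: algebra_simps)
    then have "((a-b)*(b-c)*(c-a))^2 = (complex_of_real r)^2 * (a*b*c)^2"
      by (simp add: power_mult_distrib)
    then show False using key r by blast
  qed
qed

lemma refl_gen:
  fixes y p pb w wb :: complex
  assumes "p*pb = 1" "y \<noteq> 0" "y^3 - wb*y^2 + pb*w*y - pb = 0"
  shows "(1/y)^3 - w*(1/y)^2 + p*wb*(1/y) - p = 0"
proof -
  have "(1/y)^3 - w*(1/y)^2 + p*wb*(1/y) - p = (-p/y^3) * (y^3 - wb*y^2 + pb*w*y - pb)"
    using assms(1,2) by (simp add: field_simps power2_eq_square power3_eq_cube)
  then show ?thesis using assms(3) by simp
qed

lemma refl_root:
  assumes p: "cmod p = 1" and r0: "r \<noteq> 0" and hr: "r^3 - w*r^2 + p*cnj w*r - p = 0"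
  shows "(1/cnj r)^3 - w*(1/cnj r)^2 + p*cnj w*(1/cnj r) - p = 0"
proof -
  have "cnj (r^3 - w*r^2 + p*cnj w*r - p) = 0" using hr by simp
  then have "(cnj r)^3 - cnj w*(cnj r)^2 + cnj p*w*(cnj r) - cnj p = 0" by simp
  then show ?thesis using refl_gen[OF unit_cnj[OF p]] r0 by simp
qed

lemma roots_exist:
  assumes p: "cmod p = 1" and e: "RR p w = 4 * s^2"
  shows "\<exists>a b c. cmod a = 1 \<and> cmod b = 1 \<and> cmod c = 1 \<and> a*b*c = p \<and> a+b+c = w \<and> ssf a b c = s"
proof -
  have p0: "p \<noteq> 0" using p by auto
  obtain a where ha: "a^3 - w*a^2 + p*cnj w*a - p = 0" using cubic_root by blast
  have a0: "a \<noteq> 0" using ha p0 by auto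
  define d where "d = (w-a)^2 - 4*p/a"
  define b where "b = ((w-a) + csqrt d)/2"
  define c where "c = (w-a) - b"
  have sum: "a+b+c = w" unfolding c_def by simp
  have bc: "b*c = p/a"
  proof -
    have "b*c = ((w-a)^2 - (csqrt d)^2)/4" unfolding c_def b_def
      by (simp add: field_simps power2_eq_square)
    then show ?thesis unfolding d_def by simp
  qed
  have prod: "a*b*c = p" using bc a0 by (simp add: mult.assoc)
  have e2: "a*b+b*c+c*a = p*cnj w"
  proof -
    have "b + c = w - a" using sum by (simp add: algebra_simps)
    then have "a*b+b*c+c*a = a*(w-a) + p/a" using bc by (simp add: algebra_simps) (metis distrib_left)
    also have "\<dots> = p*cnj w - (a^3 - w*a^2 + p*cnj w*a - p)/a" using a0
      by (simp add: field_simps power2_eq_square power3_eq_cube)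
    finally show ?thesis using ha by simp
  qed
  have fac: "z^3 - w*z^2 + p*cnj w*z - p = (z-a)*(z-b)*(z-c)" for z
  proof -
    have "(z-a)*(z-b)*(z-c) = z^3 - (a+b+c)*z^2 + (a*b+b*c+c*a)*z - a*b*c"
      by (simp add: algebra_simps power2_eq_square power3_eq_cube)
    then show ?thesis unfolding sum e2 prod by simp
  qed
  have b0: "b \<noteq> 0" and c0: "c \<noteq> 0" using prod p0 by auto
  have refl: "1/cnj r \<in> {a,b,c}" if "r \<in> {a,b,c}" for r
  proof -
    have r0: "r \<noteq> 0" using that a0 b0 c0 by auto
    have "r^3 - w*r^2 + p*cnj w*r - p = 0" unfolding fac using that by auto
    from refl_root[OF p r0 this] have "(1/cnj r - a)*(1/cnj r - b)*(1/cnj r - c) = 0"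
      unfolding fac by simp
    then show ?thesis by auto
  qed
  have D0: "((a-b)*(b-c)*(c-a))^2 = -(p^2) * of_real (4 * s^2)"
    using disc_p_gen[OF unit_cnj[OF p] sum e2 prod] unfolding e[symmetric] RR_complex by simp
  have pm: "cmod (a*b*c) = 1" "cmod (b*c*a) = 1" "cmod (c*a*b) = 1" using prod p by (simp_all add: mult_ac)
  have ua: "cmod a = 1"
    using unit_a[OF a0 b0 c0 pm(1) refl[of a], of s] D0 prod by simp
  have ub: "cmod b = 1"
  proof -
    have "((b-c)*(c-a)*(a-b))^2 = -((b*c*a)^2) * of_real (4 * s^2)" using D0 prod by (simp add: mult_ac)
    then show ?thesis using unit_a[OF b0 c0 a0 pm(2), of s] refl[of b] by auto
  qed
  have uc: "cmod c = 1"
  proof -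
    have "((c-a)*(a-b)*(b-c))^2 = -((c*a*b)^2) * of_real (4 * s^2)" using D0 prod by (simp add: mult_ac)
    then show ?thesis using unit_a[OF c0 a0 b0 pm(3), of s] refl[of c] by auto
  qed
  have "4 * (ssf a b c)^2 = 4 * s^2" using sq_identity[OF ua ub uc] prod sum e by simp
  then have "(ssf a b c)^2 = s^2" by simp
  then have "ssf a b c = s \<or> ssf a b c = -s" by (simp add: power2_eq_iff)
  then show ?thesis
  proof
    assume "ssf a b c = s" then show ?thesis using ua ub uc prod sum by blast
  next
    assume "ssf a b c = -s"
    then have "ssf a c b = s" using ssf_swap[of a b c] by simp
    moreover have "a*c*b = p" "a+c+b = w" using prod sum by (simp_all add: mult_ac add_ac)
    ultimately show ?thesis using ua ub uc by blast
  qed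
qed

definition VV :: "complex \<times> complex \<times> complex \<Rightarrow> real^3" where
  "VV x = (case x of (a,b,c) \<Rightarrow> (\<chi> i. if i = 1 then Re (a+b+c) else if i = 2 then Im (a+b+c) else ssf a b c))"

lemma VV_comp:
  "VV (a,b,c) $ 1 = Re (a+b+c)" "VV (a,b,c) $ 2 = Im (a+b+c)" "VV (a,b,c) $ 3 = ssf a b c"
  unfolding VV_def by simp_all

lemma norm3: "(norm (v::real^3))^2 = (v$1)^2 + (v$2)^2 + (v$3)^2"
  by (simp add: norm_vec_def L2_set_def sum_3)

lemma vec3_eq: "(v::real^3) = w \<longleftrightarrow> v$1 = w$1 \<and> v$2 = w$2 \<and> v$3 = w$3"
  by (simp add: vec_eq_iff forall_3)

lemma normVV: "(norm (VV (a,b,c)))^2 = (cmod (a+b+c))^2 + (ssf a b c)^2"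
  unfolding norm3 VV_comp by (simp add: cmod_power2)

lemma VV_nonzero:
  assumes "cmod a = 1" "cmod b = 1" "cmod c = 1"
  shows "VV (a,b,c) \<noteq> 0"
proof
  assume "VV (a,b,c) = 0"
  then have "(norm (VV (a,b,c)))^2 = 0" by simp
  then have h: "(cmod (a+b+c))^2 + (ssf a b c)^2 = 0" unfolding normVV .
  have "(cmod (a+b+c))^2 = 0" "(ssf a b c)^2 = 0"
    using h zero_le_power2[of "cmod (a+b+c)"] zero_le_power2[of "ssf a b c"] by linarith+
  then have "cmod (a+b+c) = 0" "ssf a b c = 0" by simp_all
  then have "RR (a*b*c) (a+b+c) = 0" using sq_identity[OF assms] by simp
  moreover have "RR (a*b*c) (a+b+c) = 27" using \<open>cmod (a+b+c) = 0\<close> unfolding RR_def by simp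
  ultimately show False by simp
qed

lemma surj_pt:
  fixes y :: "real^3"
  assumes p: "cmod p = 1" and y: "norm y = 1"
  shows "\<exists>a b c r. cmod a = 1 \<and> cmod b = 1 \<and> cmod c = 1 \<and> a*b*c = p \<and> r > 0 \<and> VV (a,b,c) = r *\<^sub>R y"
proof -
  define u where "u = Complex (y$1) (y$2)"
  define \<sigma> where "\<sigma> = y$3"
  define m where "m = cmod u"
  define c0 where "c0 = Re (cnj p * u^3)"
  have m0: "m \<ge> 0" unfolding m_def by simp
  have mu: "m^2 + \<sigma>^2 = 1"
    using norm3[of y] y unfolding m_def \<sigma>_def u_def by (simp add: cmod_power2)
  have cm: "c0 \<le> m^3" unfolding c0_def m_def by (rule Re_bound[OF p])
  define g where "g r = 27 - (18*m^2 + 4*\<sigma>^2)*r^2 + 8*c0*r^3 - m^4*r^4" for r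
  have g0: "g 0 = 27" unfolding g_def by simp
  obtain R where R: "R \<ge> 0" "g R \<le> 0"
  proof (cases "m = 0")
    case True
    then have "u = 0" unfolding m_def by simp
    then have "c0 = 0" unfolding c0_def by simp
    have "\<sigma>^2 = 1" using mu True by simp
    then have "g 3 \<le> 0" unfolding g_def using True \<open>c0 = 0\<close> by simp
    then show ?thesis using that[of 3] by simp
  next
    case False
    then have mp: "m > 0" using m0 by simp
    have "g (3/m) = -216 - 36*\<sigma>^2/m^2 + 216*c0/m^3"
      unfolding g_def using mp by (simp add: field_simps power2_eq_square power3_eq_cube power4_eq_xxxx)
    moreover have "c0/m^3 \<le> 1" using cm mp by (simp add: divide_le_eq)
    moreover have "\<sigma>^2/m^2 \<ge> 0" by simp
    ultimately have "g (3/m) \<le> 0" by linarith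
    then show ?thesis using that[of "3/m"] mp by simp
  qed
  have cont: "continuous_on {0..R} g" unfolding g_def by (intro continuous_intros)
  obtain r where r: "0 \<le> r" "r \<le> R" "g r = 0" using IVT2'[of g R 0 0, OF R(2) _ R(1) cont] g0 by auto
  have r0: "r > 0" using r g0 by (cases "r = 0") auto
  define w where "w = complex_of_real r * u"
  define s where "s = r * \<sigma>"
  have cw: "cmod w = r * m" unfolding w_def m_def using r0 by (simp add: norm_mult)
  have rew: "Re (cnj p * w^3) = r^3 * c0" unfolding w_def c0_def
    by (simp add: power_mult_distrib algebra_simps)
  have "RR p w = 4 * s^2"
    unfolding RR_def cw rew s_def using r(3) unfolding g_def
    by (simp add: power_mult_distrib algebra_simps)
  from roots_exist[OF p this] obtain a b c where abc: "cmod a = 1" "cmod b = 1" "cmod c = 1"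
    "a*b*c = p" "a+b+c = w" "ssf a b c = s" by blast
  have "VV (a,b,c) = r *\<^sub>R y"
    unfolding vec3_eq VV_comp abc w_def s_def u_def \<sigma>_def by simp
  then show ?thesis using abc r0 by blast
qed

lemma inj_pt:
  assumes u: "cmod a = 1" "cmod b = 1" "cmod c = 1"
    and u': "cmod a' = 1" "cmod b' = 1" "cmod c' = 1"
    and p: "a'*b'*c' = a*b*c"
    and G: "(1/norm (VV (a',b',c'))) *\<^sub>R VV (a',b',c') = (1/norm (VV (a,b,c))) *\<^sub>R VV (a,b,c)"
  shows "(a',b',c') \<in> {(a,b,c),(b,c,a),(c,a,b)}"
proof -
  define n where "n = norm (VV (a,b,c))"
  define n' where "n' = norm (VV (a',b',c'))"
  have n0: "n > 0" unfolding n_def using VV_nonzero[OF u] by simp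
  have n0': "n' > 0" unfolding n'_def using VV_nonzero[OF u'] by simp
  define l where "l = n'/n"
  have l0: "l > 0" unfolding l_def using n0 n0' by simp
  have V: "VV (a',b',c') = l *\<^sub>R VV (a,b,c)"
  proof -
    have "VV (a',b',c') = n' *\<^sub>R ((1/n') *\<^sub>R VV (a',b',c'))" using n0' by simp
    also have "\<dots> = n' *\<^sub>R ((1/n) *\<^sub>R VV (a,b,c))" using G unfolding n_def n'_def by simp
    also have "\<dots> = l *\<^sub>R VV (a,b,c)" unfolding l_def by simp
    finally show ?thesis .
  qed
  have w': "a'+b'+c' = complex_of_real l * (a+b+c)"
    using V unfolding vec3_eq by (simp add: VV_comp complex_eq_iff)
  have s': "ssf a' b' c' = l * ssf a b c"
    using V unfolding vec3_eq by (simp add: VV_comp)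
  have e1: "RR (a*b*c) (a+b+c) = 4 * (ssf a b c)^2" using sq_identity[OF u] by simp
  have e2: "RR (a*b*c) (complex_of_real l * (a+b+c)) = 4 * (l * ssf a b c)^2"
    using sq_identity[OF u'] unfolding p w' s' by simp
  have pu: "cmod (a*b*c) = 1" using u by (simp add: norm_mult)
  have "l = 1" by (rule scale_unique[OF pu l0 e1 e2])
  then have "a'+b'+c' = a+b+c" "ssf a' b' c' = ssf a b c" using w' s' by simp_all
  then show ?thesis using orbit_inv[OF u u' p] by blast
qed

definition GG :: "complex \<times> complex \<times> complex \<Rightarrow> real^3" where
  "GG x = (1/norm (VV x)) *\<^sub>R VV x"

definition FF :: "complex \<times> complex \<times> complex \<Rightarrow> complex \<times> (real^3)" where
  "FF x = (case x of (a,b,c) \<Rightarrow> a*b*c, GG x)"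

lemma cont_VV: "continuous_on UNIV VV"
proof -
  have c: "continuous_on UNIV (\<lambda>x. VV x $ i)" for i
  proof -
    have eq: "(\<lambda>x. VV x $ i) = (if i = 1 then (\<lambda>x. Re (fst x + fst (snd x) + snd (snd x)))
       else if i = 2 then (\<lambda>x. Im (fst x + fst (snd x) + snd (snd x)))
       else (\<lambda>x. Im (fst x * cnj (fst (snd x)) + fst (snd x) * cnj (snd (snd x)) + snd (snd x) * cnj (fst x))))"
      by (rule ext) (auto simp: VV_def ssf_def split: prod.splits)
    have c1: "continuous_on UNIV (\<lambda>x::complex\<times>complex\<times>complex. Re (fst x + fst (snd x) + snd (snd x)))"
      by (intro continuous_intros)
    have c2: "continuous_on UNIV (\<lambda>x::complex\<times>complex\<times>complex. Im (fst x + fst (snd x) + snd (snd x)))"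
      by (intro continuous_intros)
    have c3: "continuous_on UNIV (\<lambda>x::complex\<times>complex\<times>complex. Im (fst x * cnj (fst (snd x)) + fst (snd x) * cnj (snd (snd x)) + snd (snd x) * cnj (fst x)))"
      by (intro continuous_intros)
    show ?thesis
    proof (cases "i = 1")
      case True then show ?thesis unfolding eq using c1 by simp
    next
      case False then show ?thesis unfolding eq using c2 c3 by (cases "i = 2") simp_all
    qed
  qed
  have "continuous_on UNIV (\<lambda>x. \<chi> i. VV x $ i)"
    by (rule continuous_on_vec_lambda) (use c in blast)
  then show ?thesis by simp
qed

lemma cyc_orbit_eq: "cyc_orbit (a,b,c) = {(a,b,c),(b,c,a),(c,a,b)}"
  by (simp add: cyc_orbit_def cycperm_def)

lemma FF_rot: "FF (b,c,a) = FF (a,b,c)"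
proof -
  have "VV (b,c,a) = VV (a,b,c)" unfolding vec3_eq VV_comp using ssf_rot[of b c a]
    by (simp add: add_ac)
  then show ?thesis unfolding FF_def GG_def by (simp add: mult_ac)
qed

lemma torus3_eq: "torus3 = top_of_set (S1 \<times> S1 \<times> S1)"
  unfolding torus3_def by simp

lemma quot: "quotient_map torus3 CP3_S1 cyc_orbit"
proof -
  let ?X = torus3
  have "{x \<in> topspace ?X. cyc_orbit x \<in> cyc_orbit ` topspace ?X} = topspace ?X" by blast
  then have o: "openin CP3_S1 (cyc_orbit ` topspace ?X)"
    unfolding CP3_S1_def openin_quotient_topology by simp
  have t: "topspace CP3_S1 = cyc_orbit ` topspace ?X"
  proof
    show "topspace CP3_S1 \<subseteq> cyc_orbit ` topspace ?X"
      using openin_topspace[of CP3_S1] unfolding CP3_S1_def openin_quotient_topology by blast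
    show "cyc_orbit ` topspace ?X \<subseteq> topspace CP3_S1" using openin_subset[OF o] .
  qed
  show ?thesis unfolding quotient_map_def
  proof (intro conjI allI impI)
    show "cyc_orbit ` topspace ?X = topspace CP3_S1" using t by simp
    fix U assume U: "U \<subseteq> topspace CP3_S1"
    have "openin CP3_S1 U \<longleftrightarrow> U \<subseteq> cyc_orbit ` topspace ?X \<and> openin ?X {x \<in> topspace ?X. cyc_orbit x \<in> U}"
      unfolding CP3_S1_def by (rule openin_quotient_topology)
    then show "openin ?X {x \<in> topspace ?X. cyc_orbit x \<in> U} = openin CP3_S1 U"
      using U t by blast
  qed
qed

lemma FF_in:
  assumes "x \<in> S1 \<times> S1 \<times> S1" shows "FF x \<in> S1 \<times> S2"
proof -
  obtain a b c where x: "x = (a,b,c)" by (cases x) auto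
  have u: "cmod a = 1" "cmod b = 1" "cmod c = 1" using assms x by (auto simp: S1_def)
  have "norm (VV (a,b,c)) \<noteq> 0" using VV_nonzero[OF u] by simp
  then have "norm (GG (a,b,c)) = 1" unfolding GG_def by simp
  moreover have "cmod (a*b*c) = 1" using u by (simp add: norm_mult)
  ultimately show ?thesis unfolding x FF_def by (simp add: S1_def S2_def)
qed

lemma cont_FF: "continuous_on (S1 \<times> S1 \<times> S1) FF"
proof -
  have nz: "norm (VV x) \<noteq> 0" if "x \<in> S1 \<times> S1 \<times> S1" for x
    using that VV_nonzero by (cases x) (auto simp: S1_def)
  have cV: "continuous_on (S1 \<times> S1 \<times> S1) VV" using cont_VV continuous_on_subset by blast
  have cG: "continuous_on (S1 \<times> S1 \<times> S1) GG"
    unfolding GG_def using cV nz by (intro continuous_intros) auto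
  have cp: "continuous_on (S1 \<times> S1 \<times> S1) (\<lambda>x. fst x * fst (snd x) * snd (snd x))"
    by (intro continuous_intros)
  have eq: "FF = (\<lambda>x. (fst x * fst (snd x) * snd (snd x), GG x))"
    by (rule ext) (auto simp: FF_def split: prod.splits)
  show ?thesis unfolding eq by (rule continuous_on_Pair[OF cp cG])
qed

lemma orbit_same:
  assumes "(a',b',c') \<in> {(a,b,c),(b,c,a),(c,a,b)}"
  shows "cyc_orbit (a',b',c') = cyc_orbit (a,b,c)"
proof -
  have "(a',b',c') = (a,b,c) \<or> (a',b',c') = (b,c,a) \<or> (a',b',c') = (c,a,b)" using assms by blast
  then show ?thesis
  proof (elim disjE)
    assume "(a',b',c') = (a,b,c)" then show ?thesis by simp
  next
    assume h: "(a',b',c') = (b,c,a)"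
    show ?thesis unfolding h cyc_orbit_eq by blast
  next
    assume h: "(a',b',c') = (c,a,b)"
    show ?thesis unfolding h cyc_orbit_eq by blast
  qed
qed

lemma FF_same:
  assumes "(a',b',c') \<in> {(a,b,c),(b,c,a),(c,a,b)}"
  shows "FF (a',b',c') = FF (a,b,c)"
proof -
  have "(a',b',c') = (a,b,c) \<or> (a',b',c') = (b,c,a) \<or> (a',b',c') = (c,a,b)" using assms by blast
  then show ?thesis
  proof (elim disjE)
    assume "(a',b',c') = (a,b,c)" then show ?thesis by simp
  next
    assume h: "(a',b',c') = (b,c,a)"
    show ?thesis unfolding h by (rule FF_rot)
  next
    assume h: "(a',b',c') = (c,a,b)"
    show ?thesis unfolding h using FF_rot[of c a b] FF_rot[of a b c] by simp
  qed
qed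

lemma FF_orbit:
  assumes x: "x \<in> S1 \<times> S1 \<times> S1" and y: "y \<in> S1 \<times> S1 \<times> S1"
  shows "FF x = FF y \<longleftrightarrow> cyc_orbit x = cyc_orbit y"
proof -
  obtain a b c where xe: "x = (a,b,c)" by (cases x) auto
  obtain a' b' c' where ye: "y = (a',b',c')" by (cases y) auto
  have u: "cmod a = 1" "cmod b = 1" "cmod c = 1" using x xe by (auto simp: S1_def)
  have u': "cmod a' = 1" "cmod b' = 1" "cmod c' = 1" using y ye by (auto simp: S1_def)
  show ?thesis
  proof
    assume "FF x = FF y"
    then have "a'*b'*c' = a*b*c" "GG (a',b',c') = GG (a,b,c)" unfolding xe ye FF_def by simp_all
    then have "(a',b',c') \<in> {(a,b,c),(b,c,a),(c,a,b)}"
      using inj_pt[OF u u'] unfolding GG_def by blast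
    then show "cyc_orbit x = cyc_orbit y" unfolding xe ye using orbit_same by metis
  next
    assume "cyc_orbit x = cyc_orbit y"
    moreover have "(a',b',c') \<in> cyc_orbit (a',b',c')" by (simp add: cyc_orbit_eq)
    ultimately have "(a',b',c') \<in> {(a,b,c),(b,c,a),(c,a,b)}"
      unfolding xe ye cyc_orbit_eq by simp
    then show "FF x = FF y" unfolding xe ye using FF_same by metis
  qed
qed

lemma FF_surj: "FF ` (S1 \<times> S1 \<times> S1) = S1 \<times> S2"
proof
  show "FF ` (S1 \<times> S1 \<times> S1) \<subseteq> S1 \<times> S2" using FF_in by blast
  show "S1 \<times> S2 \<subseteq> FF ` (S1 \<times> S1 \<times> S1)"
  proof
    fix z assume "z \<in> S1 \<times> S2"
    then obtain p y where z: "z = (p,y)" "cmod p = 1" "norm y = 1" by (auto simp: S1_def S2_def)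
    from surj_pt[OF z(2,3)] obtain a b c r where abc: "cmod a = 1" "cmod b = 1" "cmod c = 1"
      "a*b*c = p" "r > 0" "VV (a,b,c) = r *\<^sub>R y" by blast
    have "norm (VV (a,b,c)) = r" using abc(5,6) z(3) by simp
    then have "GG (a,b,c) = y" unfolding GG_def abc(6) using abc(5) by simp
    then have "FF (a,b,c) = z" unfolding FF_def z abc(4)[symmetric] by simp
    moreover have "(a,b,c) \<in> S1 \<times> S1 \<times> S1" using abc by (simp add: S1_def)
    ultimately show "z \<in> FF ` (S1 \<times> S1 \<times> S1)" by (metis image_eqI)
  qed
qed

theorem lemma2p1:
  shows "CP3_S1 homeomorphic_space prod_topology (top_of_set S1) (top_of_set S2)"
proof -
  let ?Y = "prod_topology (top_of_set S1) (top_of_set S2)"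
  have Y: "?Y = top_of_set (S1 \<times> S2)" by simp
  have tX: "topspace torus3 = S1 \<times> S1 \<times> S1" unfolding torus3_eq by simp
  have cF: "continuous_map torus3 ?Y FF"
    unfolding Y torus3_eq continuous_map_subtopology_eu using cont_FF FF_in by blast
  have compat: "FF x = FF y" if "x \<in> topspace torus3" "y \<in> topspace torus3" "cyc_orbit x = cyc_orbit y" for x y
    using FF_orbit[of x y] that unfolding tX by simp
  obtain g where g: "continuous_map CP3_S1 ?Y g" "g ` topspace CP3_S1 = FF ` topspace torus3"
    "\<And>x. x \<in> topspace torus3 \<Longrightarrow> g (cyc_orbit x) = FF x"
    using quotient_map_lift_exists[OF quot cF compat] by blast
  have tC: "topspace CP3_S1 = cyc_orbit ` topspace torus3"
    using quot unfolding quotient_map_def by simp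
  have surj: "g ` topspace CP3_S1 = topspace ?Y"
    using g(2) FF_surj unfolding tX Y by simp
  have inj: "inj_on g (topspace CP3_S1)"
  proof (rule inj_onI)
    fix u v assume "u \<in> topspace CP3_S1" "v \<in> topspace CP3_S1" "g u = g v"
    then obtain x y where xy: "x \<in> topspace torus3" "y \<in> topspace torus3" "u = cyc_orbit x" "v = cyc_orbit y"
      "g u = g v" unfolding tC by blast
    then have "FF x = FF y" using g(3) by simp
    then have "cyc_orbit x = cyc_orbit y" using FF_orbit[of x y] xy(1,2) unfolding tX by simp
    then show "u = v" using xy(3,4) by simp
  qed
  have cpt: "compact_space CP3_S1"
  proof -
    have "compact (S1 \<times> S1 \<times> S1)" unfolding S1_def by (intro compact_Times compact_sphere)
    then have "compact_space torus3" unfolding torus3_eq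
      by (simp add: compact_space_subtopology)
    then have "compactin CP3_S1 (cyc_orbit ` topspace torus3)"
      unfolding compact_space_def by (rule image_compactin[OF _ quotient_imp_continuous_map[OF quot]])
    then show ?thesis unfolding compact_space_def tC .
  qed
  have H: "Hausdorff_space ?Y" unfolding Y by (rule Hausdorff_space_subtopology) simp
  have "homeomorphic_map CP3_S1 ?Y g"
    by (rule continuous_imp_homeomorphic_map[OF g(1) cpt H surj inj])
  then show ?thesis using homeomorphic_map_imp_homeomorphic_space by blast
qed

end
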